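(* Let $\tilde f$ satisfy (H1), (H2) and (H3). For $i\in\{0,1\}$, $\rho_{\tilde A_i}(\tilde f)$ is contained in the convex hull of $\rho_{\Theta(\tilde A_i)}(\tilde f)$. In particular $\rho_{\tilde A_0}(\tilde f)\subset(0,+\infty)$ and $\rho_{\tilde A_1}(\tilde f)\subset(-\infty,0)$.
   Context: Let $\tilde f$ be a homeomorphism of $\mathbb{R}^2$ isotopic to the identity and commuting with $T(x,y)=(x+1,y)$; $p_1$ is the first coordinate projection. For a horizontal line $\Gamma$, $U^+_\Gamma$ and $U^-_\Gamma$ denote the open half-planes above and below $\Gamma$. Hypotheses: (H1) $\Gamma_0,\Gamma_1,\Gamma_2$ are horizontal lines with $\Gamma_0\subset U^+_{\Gamma_1}$, $\Gamma_1\subset U^+_{\Gamma_2}$, and $\tilde f(\Gamma_j)\subset U^-_{\Gamma_j}$ for $j=0,1,2$; (H2) $\tilde f^n(\Gamma_0)\cap\Gamma_2\ne\emptyset$ for every integer $n\ge1$; (H3) for $i\in\{0,1\}$, letting $\tilde A_i$ be the closed band between $\Gamma_i$ and $\Gamma_{i+1}$, the sets $\Theta(\tilde A_0),\Theta(\tilde A_1)$ are non-empty and $\rho_{\Theta(\tilde A_0)}(\tilde f)\subset(0,+\infty)$, $\rho_{\Theta(\tilde A_1)}(\tilde f)\subset(-\infty,0)$. Here $\Theta(\tilde E)=\{x\in\tilde E:\tilde f^n(x)\in\tilde E\ \forall n\in\mathbb{Z}\}$, and for a closed $T$-invariant set $\tilde E$ contained in a horizontal band, $\rho_{\tilde E}(\tilde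 f)=\bigcap_{m\ge1}\mathrm{Cl}\big(\bigcup_{n\ge m}\{\frac1n(p_1(\tilde f^n(\tilde z))-p_1(\tilde z)): \tilde z\in\tilde E,\ \tilde f^n(\tilde z)\in\tilde E\}\big)$, closure in $\overline{\mathbb{R}}=\mathbb{R}\cup\{\pm\infty\}$. *)

theory Defs
  imports "HOL-Analysis.Analysis" "HOL-Library.Extended_Real"
begin

text \<open>The plane is modelled as real \<times> real; p1 is fst.\<close>

definition Ttrans :: "real \<times> real \<Rightarrow> real \<times> real" where
  "Ttrans z = (fst z + 1, snd z)"

definition isotopic_to_id :: "(real \<times> real \<Rightarrow> real \<times> real) \<Rightarrow> bool" where
  "isotopic_to_id f \<longleftrightarrow>
     (\<exists>H :: real \<times> (real \<times> real) \<Rightarrow> real \<times> real.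
        continuous_on ({0..1} \<times> UNIV) H \<and>
        (\<forall>t\<in>{0..1}. \<exists>g. homeomorphism UNIV UNIV (\<lambda>z. H (t, z)) g) \<and>
        (\<forall>z. H (0, z) = z) \<and> (\<forall>z. H (1, z) = f z))"

definition hline :: "real \<Rightarrow> (real \<times> real) set" where
  "hline c = {z. snd z = c}"

definition Uplus :: "(real \<times> real) set \<Rightarrow> (real \<times> real) set" where
  "Uplus \<Gamma> = {z. \<forall>w\<in>\<Gamma>. snd z > snd w}"

definition Uminus :: "(real \<times> real) set \<Rightarrow> (real \<times> real) set" where
  "Uminus \<Gamma> = {z. \<forall>w\<in>\<Gamma>. snd z < snd w}"

definition band :: "real \<Rightarrow> real \<Rightarrow> (real \<times> real) set" where
  "band a b = {z. min a b \<le> snd z \<and> snd z \<le> max a b}"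

definition iter_int :: "('a \<Rightarrow> 'a) \<Rightarrow> int \<Rightarrow> 'a \<Rightarrow> 'a" where
  "iter_int f n = (if 0 \<le> n then f ^^ nat n else inv f ^^ nat (- n))"

definition Theta :: "(real \<times> real \<Rightarrow> real \<times> real) \<Rightarrow> (real \<times> real) set \<Rightarrow> (real \<times> real) set" where
  "Theta f E = {x \<in> E. \<forall>n::int. iter_int f n x \<in> E}"

definition rot_set :: "(real \<times> real \<Rightarrow> real \<times> real) \<Rightarrow> (real \<times> real) set \<Rightarrow> ereal set" where
  "rot_set f E = (\<Inter>m\<in>{1::nat..}. closure (\<Union>n\<in>{m..}.
      {ereal ((fst ((f ^^ n) z) - fst z) / real n) | z. z \<in> E \<and> (f ^^ n) z \<in> E}))"

definition ereal_hull :: "ereal set \<Rightarrow> ereal set" where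
  "ereal_hull S = {x. \<exists>a\<in>S. \<exists>b\<in>S. a \<le> x \<and> x \<le> b}"

end

theory Submission
  imports Defs
begin


definition shift :: "int \<Rightarrow> real \<times> real \<Rightarrow> real \<times> real" where
  "shift j z = (fst z + of_int j, snd z)"

lemma shift_simps[simp]: "fst (shift j z) = fst z + of_int j" "snd (shift j z) = snd z"
  by (auto simp: shift_def)

lemma shift_add: "shift i (shift j z) = shift (i+j) z"
  by (simp add: shift_def prod_eq_iff)

lemma shift_0[simp]: "shift 0 z = z" by (simp add: shift_def)

locale S0 =
  fixes f g :: "real \<times> real \<Rightarrow> real \<times> real"
  assumes hom: "homeomorphism UNIV UNIV f g"
    and comm: "\<forall>z. f (Ttrans z) = Ttrans (f z)"

locale S = S0 f g for f g :: "real \<times> real \<Rightarrow> real \<times> real" +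
  fixes E :: "(real \<times> real) set" and lo hi :: real
  assumes Eclosed: "closed E"
    and Eshift: "\<And>z j. z \<in> E \<Longrightarrow> shift j z \<in> E"
    and Ebdd: "\<And>z. z \<in> E \<Longrightarrow> lo \<le> snd z \<and> snd z \<le> hi"
    and Seg: "\<And>z n k. z \<in> E \<Longrightarrow> (f^^n) z \<in> E \<Longrightarrow> k \<le> n \<Longrightarrow> (f^^k) z \<in> E"

context S0
begin

lemma gf[simp]: "g (f x) = x" and fg[simp]: "f (g x) = x"
  using hom by (auto intro: homeomorphism_apply1 homeomorphism_apply2)

lemma contf: "continuous_on UNIV f" and contg: "continuous_on UNIV g"
  using hom by (auto simp: homeomorphism_def)

lemma inv_f: "inv f = g"
  by (metis gf fg inv_equality ext)

lemma f_shift_nat: "f (shift (int n) z) = shift (int n) (f z)"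
proof (induction n arbitrary: z)
  case 0 then show ?case by simp
next
  case (Suc n)
  have "shift (int (Suc n)) z = Ttrans (shift (int n) z)"
    by (simp add: shift_def Ttrans_def)
  moreover have "shift (int (Suc n)) (f z) = Ttrans (shift (int n) (f z))"
    by (simp add: shift_def Ttrans_def)
  moreover have "f (Ttrans (shift (int n) z)) = Ttrans (f (shift (int n) z))" using comm by blast
  ultimately show ?case using Suc by simp
qed

lemma f_shift: "f (shift j z) = shift j (f z)"
proof (cases "j \<ge> 0")
  case True
  then obtain n where "j = int n" by (metis nonneg_eq_int)
  then show ?thesis by (simp add: f_shift_nat)
next
  case False
  then obtain n where n: "j = - int n" by (metis nonneg_eq_int neg_0_le_iff_le minus_minus nle_le)
  have "f z = f (shift (int n) (shift j z))" using n by (simp add: shift_add)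
  also have "\<dots> = shift (int n) (f (shift j z))" by (simp add: f_shift_nat)
  finally have "shift j (f z) = shift j (shift (int n) (f (shift j z)))" by simp
  then show ?thesis using n by (simp add: shift_add)
qed

lemma g_shift: "g (shift j z) = shift j (g z)"
proof -
  have "g (shift j z) = g (shift j (f (g z)))" by simp
  also have "\<dots> = shift j (g z)" by (simp only: f_shift[symmetric] gf)
  finally show ?thesis .
qed

lemma fn_shift: "(f^^k) (shift j z) = shift j ((f^^k) z)"
  by (induction k) (auto simp: f_shift)

lemma gn_shift: "(g^^k) (shift j z) = shift j ((g^^k) z)"
  by (induction k) (auto simp: g_shift)

lemma cont_iter: "continuous_on UNIV (h^^k)" if "continuous_on UNIV h" for h :: "real \<times> real \<Rightarrow> real \<times> real"
proof (induction k)
  case 0 then show ?case by (simp add: continuous_on_id)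
next
  case (Suc k)
  then show ?case
    by (simp only: funpow.simps(2)) (metis continuous_on_compose continuous_on_subset subset_UNIV that)
qed

lemma gf_iter1: "k \<le> m \<Longrightarrow> (g^^k) ((f^^m) z) = (f^^(m-k)) z"
proof (induction k arbitrary: m)
  case 0 then show ?case by simp
next
  case (Suc k)
  then obtain m' where m: "m = Suc m'" by (cases m) auto
  have "(g^^Suc k) ((f^^m) z) = (g^^k) (g ((f^^m) z))" by (simp only: funpow_Suc_right comp_apply)
  also have "g ((f^^m) z) = (f^^m') z" using m by simp
  finally show ?case using Suc m by simp
qed

lemma gf_iter2: "(g^^(k+m)) ((f^^m) z) = (g^^k) z"
proof -
  have "(g^^(k+m)) ((f^^m) z) = (g^^k) ((g^^m) ((f^^m) z))" by (simp add: funpow_add)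
  then show ?thesis using gf_iter1[of m m z] by simp
qed

definition P :: "real \<Rightarrow> nat \<Rightarrow> real \<times> real \<Rightarrow> real" where
  "P s n z = s * (fst ((f^^n) z) - fst z)"

lemma P_cont: "continuous_on UNIV (P s n)"
  unfolding P_def
  by (intro continuous_intros continuous_on_compose2[OF continuous_on_fst] cont_iter contf) auto

lemma P_shift: "P s n (shift j z) = P s n z"
  by (simp add: P_def fn_shift algebra_simps)

lemma P_add: "P s (a+b) z = P s a z + P s b ((f^^a) z)"
proof -
  have "(f^^(a+b)) z = (f^^b) ((f^^a) z)" by (metis add.commute comp_apply funpow_add)
  then show ?thesis by (simp add: P_def algebra_simps)
qed

end

context S begin

definition F :: "(real \<times> real) set" where "F = E \<inter> {z. 0 \<le> fst z \<and> fst z \<le> 1}"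
definition nrm :: "real \<times> real \<Rightarrow> real \<times> real" where "nrm z = shift (- \<lfloor>fst z\<rfloor>) z"

lemma F_compact: "compact F"
proof -
  have "F = E \<inter> ({0..1} \<times> {lo..hi})" unfolding F_def using Ebdd by (auto simp: mem_Times_iff)
  moreover have "compact ({0..1::real} \<times> {lo..hi})" by (intro compact_Times compact_Icc)
  ultimately show ?thesis using closed_Int_compact Eclosed by metis
qed

lemma nrm_F: "z \<in> E \<Longrightarrow> nrm z \<in> F"
proof -
  have "0 \<le> fst z - of_int \<lfloor>fst z\<rfloor>" "fst z - of_int \<lfloor>fst z\<rfloor> \<le> 1"
    using of_int_floor_le[of "fst z"] real_of_int_floor_add_one_gt[of "fst z"] by linarith+
  then show "z \<in> E \<Longrightarrow> nrm z \<in> F" unfolding F_def nrm_def using Eshift[of z] by simp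
qed

lemma P_nrm: "P s n (nrm z) = P s n z" by (simp add: nrm_def P_shift)

lemma bound: "\<exists>B\<ge>0. \<forall>z\<in>E. \<bar>P s 1 z\<bar> \<le> B"
proof -
  have "compact (P s 1 ` F)"
    by (rule compact_continuous_image[OF continuous_on_subset[OF P_cont] F_compact]) auto
  then obtain B where B: "\<forall>x\<in>P s 1 ` F. norm x \<le> B" using compact_imp_bounded bounded_iff by metis
  have "\<forall>z\<in>E. \<bar>P s 1 z\<bar> \<le> max B 0"
    using B nrm_F P_nrm by (metis image_eqI real_norm_def max.coboundedI1)
  then show ?thesis by (intro exI[of _ "max B 0"]) auto
qed

lemma seg_bound:
  assumes B: "\<forall>z\<in>E. \<bar>P s 1 z\<bar> \<le> B"
  shows "z \<in> E \<Longrightarrow> (f^^n) z \<in> E \<Longrightarrow> \<bar>P s n z\<bar> \<le> real n * B"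
proof (induction n)
  case 0 then show ?case by (simp add: P_def)
next
  case (Suc n)
  have "(f^^n) z \<in> E" using Seg[OF Suc.prems] by simp
  then have "\<bar>P s n z\<bar> \<le> real n * B" using Suc by simp
  moreover have "\<bar>P s 1 ((f^^n) z)\<bar> \<le> B" using B \<open>(f^^n) z \<in> E\<close> by simp
  moreover have "P s (Suc n) z = P s n z + P s 1 ((f^^n) z)" using P_add[of s n 1 z] by simp
  ultimately show ?case by (simp add: algebra_simps)
qed

lemma iter_int_pos: "iter_int f (int k) = f^^k" by (simp add: iter_int_def)
lemma iter_int_neg: "iter_int f (- int k) = g^^k" by (cases "k=0") (simp_all add: iter_int_def inv_f)

lemma thetaI: "x \<in> E \<Longrightarrow> (\<And>k. (f^^k) x \<in> E) \<Longrightarrow> (\<And>k. (g^^k) x \<in> E) \<Longrightarrow> x \<in> Theta f E"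
proof -
  assume a: "x \<in> E" "\<And>k. (f^^k) x \<in> E" "\<And>k. (g^^k) x \<in> E"
  have "iter_int f n x \<in> E" for n
  proof (cases "n \<ge> 0")
    case True then show ?thesis using a by (simp add: iter_int_def)
  next
    case False then have "n = - int (nat (-n))" by simp
    then show ?thesis using a iter_int_neg by metis
  qed
  then show ?thesis using a unfolding Theta_def by blast
qed

lemma thetaD: "x \<in> Theta f E \<Longrightarrow> x \<in> E \<and> (f^^k) x \<in> E \<and> (g^^k) x \<in> E"
  unfolding Theta_def by (metis (no_types, lifting) iter_int_neg iter_int_pos mem_Collect_eq)

lemma theta_inv: assumes "x \<in> Theta f E" shows "(f^^m) x \<in> Theta f E"
proof (rule thetaI)
  show "(f^^m) x \<in> E" using thetaD[OF assms] by blast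
  fix k
  show "(f^^k) ((f^^m) x) \<in> E" using thetaD[OF assms, of "k+m"] by (simp add: funpow_add)
  show "(g^^k) ((f^^m) x) \<in> E"
  proof (cases "k \<le> m")
    case True then show ?thesis using gf_iter1 thetaD[OF assms] by simp
  next
    case False
    then obtain d where "k = d + m" by (metis add.commute le_add_diff_inverse nle_le)
    then show ?thesis using gf_iter2 thetaD[OF assms] by simp
  qed
qed

end

context S begin

lemma isCont_iter: "continuous_on UNIV h \<Longrightarrow> isCont (h^^k) x" for h :: "real \<times> real \<Rightarrow> real \<times> real"
  using cont_iter continuous_on_eq_continuous_at open_UNIV by blast

lemma keyB:
  assumes th: "\<forall>z\<in>Theta f E. P s m z < t"
  shows "\<exists>L. \<forall>z. (\<forall>k\<le>2*L. (f^^k) z \<in> E) \<longrightarrow> P s m ((f^^L) z) < t"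
proof (rule ccontr)
  assume "\<not> ?thesis"
  then have "\<forall>L. \<exists>z. (\<forall>k\<le>2*L. (f^^k) z \<in> E) \<and> t \<le> P s m ((f^^L) z)" by (auto simp: not_less)
  then obtain zz where zz: "\<And>L. (\<forall>k\<le>2*L. (f^^k) (zz L) \<in> E)" "\<And>L. t \<le> P s m ((f^^L) (zz L))" by metis
  define w where "w L = nrm ((f^^L) (zz L))" for L
  define j where "j L = - \<lfloor>fst ((f^^L) (zz L))\<rfloor>" for L
  have w_eq: "w L = shift (j L) ((f^^L) (zz L))" for L by (simp add: w_def j_def nrm_def)
  have wF: "w L \<in> F" for L unfolding w_def using zz(1)[of L] by (intro nrm_F) auto
  have wf: "(f^^k) (w L) \<in> E" if "k \<le> L" for k L
  proof -
    have "(f^^k) (w L) = shift (j L) ((f^^(k+L)) (zz L))" by (simp add: w_eq fn_shift funpow_add)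
    then show ?thesis using zz(1)[of L] that Eshift by simp
  qed
  have wg: "(g^^k) (w L) \<in> E" if "k \<le> L" for k L
  proof -
    have "(g^^k) (w L) = shift (j L) ((f^^(L-k)) (zz L))" by (simp add: w_eq gn_shift gf_iter1 that)
    then show ?thesis using zz(1)[of L] that Eshift by simp
  qed
  have wP: "t \<le> P s m (w L)" for L using zz(2) by (simp add: w_def P_nrm)
  obtain l r where l: "l \<in> F" "strict_mono r" "(w \<circ> r) \<longlonglongrightarrow> l"
    using F_compact wF unfolding compact_eq_seq_compact_metric seq_compact_def by metis
  have ev: "eventually (\<lambda>n. k \<le> r n) sequentially" for k
    using seq_suble[OF l(2)] by (intro eventually_sequentiallyI[of k]) (meson le_trans)
  have lf: "(f^^k) l \<in> E" for k
  proof (rule Lim_in_closed_set[OF Eclosed _ _ isCont_tendsto_compose[OF isCont_iter[OF contf] l(3)[unfolded comp_def]]])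
    show "\<forall>\<^sub>F n in sequentially. (f ^^ k) (w (r n)) \<in> E" using ev[of k] by eventually_elim (rule wf)
  qed simp
  have lg: "(g^^k) l \<in> E" for k
  proof (rule Lim_in_closed_set[OF Eclosed _ _ isCont_tendsto_compose[OF isCont_iter[OF contg] l(3)[unfolded comp_def]]])
    show "\<forall>\<^sub>F n in sequentially. (g ^^ k) (w (r n)) \<in> E" using ev[of k] by eventually_elim (rule wg)
  qed simp
  have "l \<in> E" using l(1) by (simp add: F_def)
  then have lth: "l \<in> Theta f E" using lf lg by (intro thetaI) auto
  have "isCont (P s m) l" using P_cont continuous_on_eq_continuous_at open_UNIV by blast
  then have "(\<lambda>n. P s m (w (r n))) \<longlonglongrightarrow> P s m l" using isCont_tendsto_compose l(3) by (auto simp: comp_def)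
  then have "t \<le> P s m l" by (rule LIMSEQ_le_const) (use wP in auto)
  then show False using th lth by force
qed

end

context S begin

lemma keyC_inner:
  assumes B: "\<forall>z\<in>E. \<bar>P s 1 z\<bar> \<le> B" and B0: "B \<ge> 0" and m: "m \<ge> 1"
    and L: "\<forall>z. (\<forall>k\<le>2*L. (f^^k) z \<in> E) \<longrightarrow> P s m ((f^^L) z) < m*c"
  shows "(\<forall>k\<le>q+2*L. (f^^k) z \<in> E) \<Longrightarrow> P s q ((f^^L) z) \<le> q*c + m*(B+\<bar>c\<bar>)"
proof (induction q arbitrary: z rule: less_induct)
  case (less q)
  show ?case
  proof (cases "q < m")
    case True
    have e1: "(f^^L) z \<in> E" using less.prems by simp
    have "(f^^q) ((f^^L) z) = (f^^(q+L)) z" by (simp add: funpow_add)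
    then have e2: "(f^^q) ((f^^L) z) \<in> E" using less.prems by simp
    have "\<bar>P s q ((f^^L) z)\<bar> \<le> q * B" using seg_bound[OF B e1 e2] .
    moreover have "real q * B \<le> q*c + q*(B+\<bar>c\<bar>)" using mult_nonneg_nonneg[of "c+\<bar>c\<bar>" "real q"] by (simp add: algebra_simps)
    moreover have "real q*(B+\<bar>c\<bar>) \<le> m*(B+\<bar>c\<bar>)" using True B0 by (intro mult_right_mono) auto
    ultimately show ?thesis by linarith
  next
    case False
    then have qm: "q = m + (q - m)" by simp
    have "P s q ((f^^L) z) = P s m ((f^^L) z) + P s (q-m) ((f^^m) ((f^^L) z))"
      using P_add[of s m "q-m"] qm by metis
    also have "(f^^m) ((f^^L) z) = (f^^L) ((f^^m) z)" by (metis add.commute comp_apply funpow_add)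
    finally have eq: "P s q ((f^^L) z) = P s m ((f^^L) z) + P s (q-m) ((f^^L) ((f^^m) z))" .
    have "\<forall>k\<le>2*L. (f^^k) z \<in> E" using less.prems by auto
    then have "P s m ((f^^L) z) < m*c" using L by blast
    moreover have "P s (q-m) ((f^^L) ((f^^m) z)) \<le> (q-m)*c + m*(B+\<bar>c\<bar>)"
    proof (rule less.IH)
      show "q - m < q" using m False by simp
      show "\<forall>k\<le>q - m + 2 * L. (f ^^ k) ((f ^^ m) z) \<in> E"
      proof (intro allI impI)
        fix k assume "k \<le> q - m + 2 * L"
        then have "(f^^(k+m)) z \<in> E" using less.prems False by simp
        then show "(f ^^ k) ((f ^^ m) z) \<in> E" by (simp add: funpow_add)
      qed
    qed
    moreover have "real (q - m) = real q - real m" using False by simp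
    ultimately show ?thesis using eq by (simp add: algebra_simps)
  qed
qed

lemma keyC:
  assumes B: "\<forall>z\<in>E. \<bar>P s 1 z\<bar> \<le> B" and B0: "B \<ge> 0" and m: "m \<ge> 1"
    and L: "\<forall>z. (\<forall>k\<le>2*L. (f^^k) z \<in> E) \<longrightarrow> P s m ((f^^L) z) < m*c"
    and z: "z \<in> E" "(f^^n) z \<in> E"
  shows "P s n z \<le> n*c + (2*L+m)*(B+\<bar>c\<bar>)"
proof (cases "n < 2*L")
  case True
  have "\<bar>P s n z\<bar> \<le> n * B" using seg_bound[OF B z] .
  moreover have "real n * B \<le> n*c + n*(B+\<bar>c\<bar>)" using mult_nonneg_nonneg[of "c+\<bar>c\<bar>" "real n"] by (simp add: algebra_simps)
  moreover have "real n*(B+\<bar>c\<bar>) \<le> (2*real L+real m)*(B+\<bar>c\<bar>)" using True B0 by (intro mult_right_mono) auto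
  ultimately show ?thesis using abs_le_D1[of "P s n z"] by simp
next
  case False
  define q where "q = n - 2*L"
  have n: "n = L + (q + L)" using False q_def by simp
  have seg: "\<forall>k\<le>q+2*L. (f^^k) z \<in> E" using Seg z n by auto
  have "P s n z = P s L z + P s (q+L) ((f^^L) z)" using P_add n by metis
  also have "P s (q+L) ((f^^L) z) = P s q ((f^^L) z) + P s L ((f^^q) ((f^^L) z))" using P_add by metis
  finally have eq: "P s n z = P s L z + P s q ((f^^L) z) + P s L ((f^^(q+L)) z)" by (simp add: funpow_add)
  have e1: "(f^^L) z \<in> E" "(f^^(q+L)) z \<in> E" using seg by auto
  have "\<bar>P s L z\<bar> \<le> L * B" using seg_bound[OF B z(1) e1(1)] .
  moreover have "(f^^L) ((f^^(q+L)) z) = (f^^n) z" using n by (simp add: funpow_add)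
  then have "(f^^L) ((f^^(q+L)) z) \<in> E" using z by simp
  then have "\<bar>P s L ((f^^(q+L)) z)\<bar> \<le> L * B" using seg_bound[OF B e1(2)] by blast
  moreover have "P s q ((f^^L) z) \<le> q*c + m*(B+\<bar>c\<bar>)" using keyC_inner[OF B B0 m L seg] .
  moreover have "real n = real q + 2 * real L" using n by simp
  moreover have "real L * B \<le> L*c + L*(B+\<bar>c\<bar>)" using mult_nonneg_nonneg[of "c+\<bar>c\<bar>" "real L"] by (simp add: algebra_simps)
  ultimately show ?thesis using eq by (simp add: algebra_simps)
qed

end

context S begin

lemma rot_mem: "v \<in> rot_set f X \<Longrightarrow> m \<ge> 1 \<Longrightarrow>
   v \<in> closure (\<Union>n\<in>{m..}. {ereal ((fst ((f ^^ n) z) - fst z) / real n) | z. z \<in> X \<and> (f ^^ n) z \<in> X})"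
  unfolding rot_set_def by blast

lemma upper:
  fixes c :: real
  assumes v: "v \<in> rot_set f E" and m: "m \<ge> 1" and th: "\<forall>z\<in>Theta f E. P 1 m z < real m*c"
  shows "v \<le> ereal c"
proof -
  obtain B where B: "B \<ge> 0" "\<forall>z\<in>E. \<bar>P 1 1 z\<bar> \<le> B" using bound by blast
  obtain L where L: "\<forall>z. (\<forall>k\<le>2*L. (f^^k) z \<in> E) \<longrightarrow> P 1 m ((f^^L) z) < m*c" using keyB[OF th] by blast
  define K where "K = (2*L+m)*(B+\<bar>c\<bar>)"
  have K0: "K \<ge> 0" using B by (simp add: K_def)
  have vle: "v \<le> ereal (c + K / real (Suc j))" for j
  proof -
    have "v \<in> closure (\<Union>n\<in>{Suc j..}. {ereal ((fst ((f ^^ n) z) - fst z) / real n) | z. z \<in> E \<and> (f ^^ n) z \<in> E})"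
      using rot_mem[OF v] by simp
    moreover have "closure (\<Union>n\<in>{Suc j..}. {ereal ((fst ((f ^^ n) z) - fst z) / real n) | z. z \<in> E \<and> (f ^^ n) z \<in> E})
       \<subseteq> {..ereal (c + K / real (Suc j))}"
    proof (rule closure_minimal[OF _ closed_atMost])
      show "(\<Union>n\<in>{Suc j..}. {ereal ((fst ((f ^^ n) z) - fst z) / real n) | z. z \<in> E \<and> (f ^^ n) z \<in> E})
         \<subseteq> {..ereal (c + K / real (Suc j))}"
      proof
        fix x assume "x \<in> (\<Union>n\<in>{Suc j..}. {ereal ((fst ((f ^^ n) z) - fst z) / real n) | z. z \<in> E \<and> (f ^^ n) z \<in> E})"
        then obtain n z where n: "Suc j \<le> n" and z: "z \<in> E" "(f^^n) z \<in> E"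
          and x: "x = ereal ((fst ((f ^^ n) z) - fst z) / real n)" by auto
        have "P 1 n z \<le> n*c + K" unfolding K_def using keyC[OF B(2) B(1) m L z] by simp
        then have "(fst ((f ^^ n) z) - fst z) \<le> n*c + K" by (simp add: P_def)
        moreover have "real n > 0" using n by simp
        ultimately have "(fst ((f ^^ n) z) - fst z) / real n \<le> (n*c + K) / real n"
          by (intro divide_right_mono) auto
        moreover have "(n*c + K) / real n = c + K / real n" using \<open>real n > 0\<close> by (simp add: field_simps)
        ultimately have "(fst ((f ^^ n) z) - fst z) / real n \<le> c + K / real n" by simp
        also have "K / real n \<le> K / real (Suc j)" using n K0 by (intro divide_left_mono) auto
        finally show "x \<in> {..ereal (c + K / real (Suc j))}" using x by simp
      qed
    qed
    ultimately show ?thesis by auto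
  qed
  have "(\<lambda>j. ereal (c + K / real (Suc j))) \<longlonglongrightarrow> ereal c"
    using tendsto_add[OF tendsto_const tendsto_mult[OF tendsto_const LIMSEQ_inverse_real_of_nat], of c K]
    by (simp add: divide_inverse)
  then show ?thesis by (rule LIMSEQ_le_const) (use vle in auto)
qed

lemma lower:
  fixes c :: real
  assumes v: "v \<in> rot_set f E" and m: "m \<ge> 1" and th: "\<forall>z\<in>Theta f E. P (-1) m z < real m*c"
  shows "ereal (-c) \<le> v"
proof -
  obtain B where B: "B \<ge> 0" "\<forall>z\<in>E. \<bar>P (-1) 1 z\<bar> \<le> B" using bound by blast
  obtain L where L: "\<forall>z. (\<forall>k\<le>2*L. (f^^k) z \<in> E) \<longrightarrow> P (-1) m ((f^^L) z) < m*c" using keyB[OF th] by blast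
  define K where "K = (2*L+m)*(B+\<bar>c\<bar>)"
  have K0: "K \<ge> 0" using B by (simp add: K_def)
  have vle: "ereal (-c - K / real (Suc j)) \<le> v" for j
  proof -
    have "v \<in> closure (\<Union>n\<in>{Suc j..}. {ereal ((fst ((f ^^ n) z) - fst z) / real n) | z. z \<in> E \<and> (f ^^ n) z \<in> E})"
      using rot_mem[OF v] by simp
    moreover have "closure (\<Union>n\<in>{Suc j..}. {ereal ((fst ((f ^^ n) z) - fst z) / real n) | z. z \<in> E \<and> (f ^^ n) z \<in> E})
       \<subseteq> {ereal (-c - K / real (Suc j))..}"
    proof (rule closure_minimal[OF _ closed_atLeast])
      show "(\<Union>n\<in>{Suc j..}. {ereal ((fst ((f ^^ n) z) - fst z) / real n) | z. z \<in> E \<and> (f ^^ n) z \<in> E})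
         \<subseteq> {ereal (-c - K / real (Suc j))..}"
      proof
        fix x assume "x \<in> (\<Union>n\<in>{Suc j..}. {ereal ((fst ((f ^^ n) z) - fst z) / real n) | z. z \<in> E \<and> (f ^^ n) z \<in> E})"
        then obtain n z where n: "Suc j \<le> n" and z: "z \<in> E" "(f^^n) z \<in> E"
          and x: "x = ereal ((fst ((f ^^ n) z) - fst z) / real n)" by auto
        have "P (-1) n z \<le> n*c + K" unfolding K_def using keyC[OF B(2) B(1) m L z] by simp
        then have "-(n*c) - K \<le> (fst ((f ^^ n) z) - fst z)" by (simp add: P_def)
        moreover have "real n > 0" using n by simp
        ultimately have "(-(n*c) - K) / real n \<le> (fst ((f ^^ n) z) - fst z) / real n"
          by (intro divide_right_mono) auto
        moreover have "(-(n*c) - K) / real n = -c - K / real n" using \<open>real n > 0\<close> by (simp add: field_simps)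
        ultimately have "-c - K / real n \<le> (fst ((f ^^ n) z) - fst z) / real n" by simp
        moreover have "K / real n \<le> K / real (Suc j)" using n K0 by (intro divide_left_mono) auto
        ultimately show "x \<in> {ereal (-c - K / real (Suc j))..}" using x by simp
      qed
    qed
    ultimately show ?thesis by auto
  qed
  have "(\<lambda>j. ereal (-c - K / real (Suc j))) \<longlonglongrightarrow> ereal (-c)"
    using tendsto_diff[OF tendsto_const tendsto_mult[OF tendsto_const LIMSEQ_inverse_real_of_nat], of "-c" K]
    by (simp add: divide_inverse)
  then show ?thesis by (rule LIMSEQ_le_const2) (use vle in auto)
qed

end

context S begin

lemma limpt:
  assumes zz: "\<And>k. zz k \<in> Theta f E" and x: "\<And>k. a \<le> x k \<and> x k \<le> b"
    and xdef: "\<And>k. x k = (fst ((f^^Suc k) (zz k)) - fst (zz k)) / real (Suc k)"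
  shows "\<exists>l. a \<le> l \<and> l \<le> b \<and> ereal l \<in> rot_set f (Theta f E)"
proof -
  have "compact {a..b}" by simp
  moreover have "\<forall>n. x n \<in> {a..b}" using x by auto
  ultimately obtain l r where l: "l \<in> {a..b}" "strict_mono r" "(x \<circ> r) \<longlonglongrightarrow> l"
    unfolding compact_eq_seq_compact_metric seq_compact_def by blast
  have "ereal l \<in> closure (\<Union>n\<in>{m..}. {ereal ((fst ((f ^^ n) z) - fst z) / real n) | z. z \<in> Theta f E \<and> (f ^^ n) z \<in> Theta f E})"
    for m
  proof (rule Lim_in_closed_set[OF closed_closure, of "\<lambda>n. ereal (x (r n))"])
    show "(\<lambda>n. ereal (x (r n))) \<longlonglongrightarrow> ereal l" using l(3) by (simp add: comp_def)
    show "\<forall>\<^sub>F n in sequentially. ereal (x (r n)) \<in> closure (\<Union>n\<in>{m..}. {ereal ((fst ((f ^^ n) z) - fst z) / real n) | z. z \<in> Theta f E \<and> (f ^^ n) z \<in> Theta f E})"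
    proof (rule eventually_sequentiallyI[of m])
      fix n assume "m \<le> n"
      then have "m \<le> Suc (r n)" using seq_suble[OF l(2), of n] by simp
      moreover have "ereal (x (r n)) = ereal ((fst ((f ^^ Suc (r n)) (zz (r n))) - fst (zz (r n))) / real (Suc (r n)))"
        using xdef by simp
      moreover have "zz (r n) \<in> Theta f E" "(f^^Suc (r n)) (zz (r n)) \<in> Theta f E" using zz by (auto intro: theta_inv simp del: funpow.simps)
      ultimately show "ereal (x (r n)) \<in> closure (\<Union>n\<in>{m..}. {ereal ((fst ((f ^^ n) z) - fst z) / real n) | z. z \<in> Theta f E \<and> (f ^^ n) z \<in> Theta f E})"
        by (intro closure_subset[THEN subsetD]) blast
    qed
  qed simp
  then show ?thesis using l(1) unfolding rot_set_def by auto
qed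

lemma exists_upper:
  fixes c :: real
  assumes "Sup (rot_set f (Theta f E)) < ereal c"
  shows "\<exists>m\<ge>1. \<forall>z\<in>Theta f E. P 1 m z < real m * c"
proof (rule ccontr)
  assume "\<not> ?thesis"
  then have nn: "\<forall>m\<ge>1. \<exists>z\<in>Theta f E. real m * c \<le> P 1 m z" using not_less by blast
  have "\<forall>k. \<exists>z. z \<in> Theta f E \<and> real (Suc k) * c \<le> P 1 (Suc k) z"
  proof
    fix k
    have "(1::nat) \<le> Suc k" by simp
    then show "\<exists>z. z \<in> Theta f E \<and> real (Suc k) * c \<le> P 1 (Suc k) z" using nn by blast
  qed
  then obtain zz where zz: "\<And>k. zz k \<in> Theta f E" "\<And>k. real (Suc k) * c \<le> P 1 (Suc k) (zz k)" by metis
  obtain B where B: "B \<ge> 0" "\<forall>z\<in>E. \<bar>P 1 1 z\<bar> \<le> B" using bound by blast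
  define x where "x k = (fst ((f^^Suc k) (zz k)) - fst (zz k)) / real (Suc k)" for k
  have "c \<le> x k \<and> x k \<le> B" for k
  proof
    have "real (Suc k) * c \<le> (fst ((f^^Suc k) (zz k)) - fst (zz k))" using zz(2)[of k] by (simp add: P_def)
    then show "c \<le> x k" unfolding x_def by (simp add: field_simps)
    have "zz k \<in> E" "(f^^Suc k) (zz k) \<in> E" using thetaD[OF zz(1)[of k], of "Suc k"] by (auto simp del: funpow.simps)
    then have "\<bar>P 1 (Suc k) (zz k)\<bar> \<le> real (Suc k) * B" by (rule seg_bound[OF B(2)])
    then have "(fst ((f^^Suc k) (zz k)) - fst (zz k)) \<le> real (Suc k) * B" by (simp add: P_def)
    then show "x k \<le> B" unfolding x_def by (simp add: field_simps)
  qed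
  then obtain l where l: "c \<le> l" "ereal l \<in> rot_set f (Theta f E)" using limpt[OF zz(1) _ x_def, of c B] by blast
  have "ereal l \<le> Sup (rot_set f (Theta f E))" using Sup_upper[OF l(2)] .
  moreover have "ereal c \<le> ereal l" using l(1) by simp
  ultimately show False using assms by (meson not_le order_trans)
qed

lemma exists_lower:
  fixes c :: real
  assumes "ereal (-c) < Inf (rot_set f (Theta f E))"
  shows "\<exists>m\<ge>1. \<forall>z\<in>Theta f E. P (-1) m z < real m * c"
proof (rule ccontr)
  assume "\<not> ?thesis"
  then have nn: "\<forall>m\<ge>1. \<exists>z\<in>Theta f E. real m * c \<le> P (-1) m z" using not_less by blast
  have "\<forall>k. \<exists>z. z \<in> Theta f E \<and> real (Suc k) * c \<le> P (-1) (Suc k) z"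
  proof
    fix k
    have "(1::nat) \<le> Suc k" by simp
    then show "\<exists>z. z \<in> Theta f E \<and> real (Suc k) * c \<le> P (-1) (Suc k) z" using nn by blast
  qed
  then obtain zz where zz: "\<And>k. zz k \<in> Theta f E" "\<And>k. real (Suc k) * c \<le> P (-1) (Suc k) (zz k)" by metis
  obtain B where B: "B \<ge> 0" "\<forall>z\<in>E. \<bar>P (-1) 1 z\<bar> \<le> B" using bound by blast
  define x where "x k = (fst ((f^^Suc k) (zz k)) - fst (zz k)) / real (Suc k)" for k
  have "-B \<le> x k \<and> x k \<le> -c" for k
  proof
    have "real (Suc k) * c \<le> - (fst ((f^^Suc k) (zz k)) - fst (zz k))" using zz(2)[of k] by (simp add: P_def)
    then show "x k \<le> -c" unfolding x_def by (simp add: field_simps)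
    have "zz k \<in> E" "(f^^Suc k) (zz k) \<in> E" using thetaD[OF zz(1)[of k], of "Suc k"] by (auto simp del: funpow.simps)
    then have "\<bar>P (-1) (Suc k) (zz k)\<bar> \<le> real (Suc k) * B" by (rule seg_bound[OF B(2)])
    then have "- (fst ((f^^Suc k) (zz k)) - fst (zz k)) \<le> real (Suc k) * B" by (simp add: P_def)
    then show "-B \<le> x k" unfolding x_def by (simp add: field_simps)
  qed
  then obtain l where l: "l \<le> -c" "ereal l \<in> rot_set f (Theta f E)" using limpt[OF zz(1) _ x_def, of "-B" "-c"] by blast
  have "Inf (rot_set f (Theta f E)) \<le> ereal l" using Inf_lower[OF l(2)] .
  moreover have "ereal l \<le> ereal (-c)" using l(1) by simp
  ultimately show False using assms by (meson not_le order_trans)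
qed

lemma main:
  assumes v: "v \<in> rot_set f E"
  shows "Inf (rot_set f (Theta f E)) \<le> v \<and> v \<le> Sup (rot_set f (Theta f E))"
proof
  show "v \<le> Sup (rot_set f (Theta f E))"
  proof (rule ccontr)
    assume "\<not> ?thesis"
    then obtain c where c: "Sup (rot_set f (Theta f E)) < ereal c" "ereal c < v"
      using ereal_dense2 not_le by metis
    obtain m where "m \<ge> 1" "\<forall>z\<in>Theta f E. P 1 m z < real m * c" using exists_upper[OF c(1)] by blast
    then have "v \<le> ereal c" using upper[OF v] by blast
    then show False using c by auto
  qed
  show "Inf (rot_set f (Theta f E)) \<le> v"
  proof (rule ccontr)
    assume "\<not> ?thesis"
    then obtain c' where c: "v < ereal c'" "ereal c' < Inf (rot_set f (Theta f E))"
      using ereal_dense2 not_le by metis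
    then have "ereal (- (-c')) < Inf (rot_set f (Theta f E))" by simp
    then obtain m where "m \<ge> 1" "\<forall>z\<in>Theta f E. P (-1) m z < real m * (-c')" using exists_lower by blast
    then have "ereal (-(-c')) \<le> v" using lower[OF v] by blast
    then show False using c by auto
  qed
qed

lemma hull:
  assumes v: "v \<in> rot_set f E"
  shows "v \<in> ereal_hull (rot_set f (Theta f E))"
proof -
  let ?R = "rot_set f (Theta f E)"
  have iv: "Inf ?R \<le> v" "v \<le> Sup ?R" using main[OF v] by auto
  have ne: "?R \<noteq> {}"
  proof
    assume "?R = {}"
    then show False using iv by (simp add: top_ereal_def bot_ereal_def)
  qed
  have cl: "closed ?R" unfolding rot_set_def by (intro closed_INT) auto
  show ?thesis unfolding ereal_hull_def
    using closed_contains_Sup_cl[OF cl ne] closed_contains_Inf_cl[OF cl ne] iv by blast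
qed

end


definition good :: "(real \<times> real \<Rightarrow> real \<times> real) \<Rightarrow> real \<Rightarrow> bool" where
  "good f c \<longleftrightarrow> (\<forall>z. snd z \<le> c \<longrightarrow> snd (f z) < c)"

context S0 begin

lemma Uminus_hline: "f ` hline c \<subseteq> Uminus (hline c) \<Longrightarrow> snd z = c \<Longrightarrow> snd (f z) < c"
  unfolding Uminus_def hline_def by (metis (mono_tags, lifting) image_eqI mem_Collect_eq snd_conv subsetD)

lemma open_image: "open X \<Longrightarrow> open (f ` X)"
proof -
  assume "open X"
  have "f ` X = g -` X" by (auto simp: image_iff) (metis fg gf)+
  then show ?thesis using open_vimage[OF \<open>open X\<close> contg] by simp
qed

lemma dichotomy:
  assumes Lc: "f ` hline c \<subseteq> Uminus (hline c)"
  shows "good f c \<or> {z. c \<le> snd z} \<subseteq> f ` {z. snd z < c}"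
proof (cases "good f c")
  case True then show ?thesis by simp
next
  case False
  then obtain z where z: "snd z \<le> c" "c \<le> snd (f z)" unfolding good_def by (auto simp: not_less)
  then have zc: "snd z < c" using Uminus_hline[OF Lc, of z] by fastforce
  let ?U = "{z::real\<times>real. c \<le> snd z}" and ?H = "{z::real\<times>real. snd z < c}" and ?H' = "{z::real\<times>real. c < snd z}"
  have U: "?U = UNIV \<times> {c..}" by auto
  have conn: "connected ?U" unfolding U by (intro convex_connected convex_Times convex_UNIV convex_real_interval)
  have "?H = UNIV \<times> {..<c}" "?H' = UNIV \<times> {c<..}" by auto
  then have oH: "open ?H" and oH': "open ?H'" by (simp_all add: open_Times)
  have injf: "inj f" by (metis gf injI)
  have "f ` ?H \<inter> f ` ?H' = f ` (?H \<inter> ?H')" by (simp add: image_Int[OF injf])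
  then have disj: "f ` ?H \<inter> f ` ?H' \<inter> ?U = {}" by auto
  have cov: "?U \<subseteq> f ` ?H \<union> f ` ?H'"
  proof
    fix u assume u: "u \<in> ?U"
    have "snd (g u) \<noteq> c" using Uminus_hline[OF Lc, of "g u"] u by auto
    then show "u \<in> f ` ?H \<union> f ` ?H'" by (metis (mono_tags) fg UnI1 UnI2 image_eqI linorder_neqE_linordered_idom mem_Collect_eq)
  qed
  have "f ` ?H \<inter> ?U = {} \<or> f ` ?H' \<inter> ?U = {}"
    by (rule connectedD[OF conn open_image[OF oH] open_image[OF oH'] disj cov])
  moreover have "f z \<in> f ` ?H \<inter> ?U" using z zc by auto
  ultimately have "f ` ?H' \<inter> ?U = {}" by blast
  then show ?thesis using cov by blast
qed

lemma good_witness: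
  assumes Lc: "f ` hline c \<subseteq> Uminus (hline c)" and q: "c < snd q" "c \<le> snd (f q)"
  shows "good f c"
proof (rule ccontr)
  assume "\<not> good f c"
  then have "f q \<in> f ` {z. snd z < c}" using dichotomy[OF Lc] q by blast
  then obtain w where "f q = f w" "snd w < c" by auto
  then have "q = w" by (metis gf)
  then show False using q \<open>snd w < c\<close> by simp
qed

lemma snd_bdd: "\<exists>M. \<forall>z. a \<le> snd z \<and> snd z \<le> b \<longrightarrow> snd (f z) \<le> M"
proof -
  have "compact ((\<lambda>z. snd (f z)) ` ({0..1} \<times> {a..b}))"
    by (intro compact_continuous_image compact_Times compact_Icc continuous_on_compose2[OF continuous_on_snd]
        continuous_on_subset[OF contf]) auto
  then obtain M where M: "\<forall>x\<in>(\<lambda>z. snd (f z)) ` ({0..1} \<times> {a..b}). norm x \<le> M"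
    using compact_imp_bounded bounded_iff by metis
  have "snd (f z) \<le> M" if "a \<le> snd z" "snd z \<le> b" for z
  proof -
    define w where "w = shift (- \<lfloor>fst z\<rfloor>) z"
    have "0 \<le> fst z - of_int \<lfloor>fst z\<rfloor>" "fst z - of_int \<lfloor>fst z\<rfloor> \<le> 1"
      using of_int_floor_le[of "fst z"] real_of_int_floor_add_one_gt[of "fst z"] by linarith+
    then have "w \<in> {0..1} \<times> {a..b}" using that by (auto simp: w_def mem_Times_iff)
    moreover have "snd (f w) = snd (f z)" by (simp add: w_def f_shift)
    ultimately show ?thesis using M by force
  qed
  then show ?thesis by blast
qed

lemma goodD: "good f c \<Longrightarrow> snd w \<le> c \<Longrightarrow> snd (f w) < c"
  unfolding good_def by blast

lemma good_iter: "good f c \<Longrightarrow> snd z \<le> c \<Longrightarrow> snd ((f^^k) z) \<le> c"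
  by (induction k) (auto dest: goodD intro: less_imp_le)

lemma good_iter_lt: "good f c \<Longrightarrow> snd z < c \<Longrightarrow> snd ((f^^k) z) < c"
  by (induction k) (simp_all add: goodD less_imp_le)

lemma band_S:
  assumes glo: "good f lo" and ghi: "good f hi" and lh: "lo < hi"
  shows "S f g (band hi lo) lo hi"
proof unfold_locales
  have bd: "band hi lo = {z. lo \<le> snd z \<and> snd z \<le> hi}" using lh by (auto simp: band_def)
  have "band hi lo = UNIV \<times> {lo..hi}" unfolding bd by auto
  then show "closed (band hi lo)" by (simp add: closed_Times)
  show "z \<in> band hi lo \<Longrightarrow> shift j z \<in> band hi lo" for z j unfolding bd by simp
  show "z \<in> band hi lo \<Longrightarrow> lo \<le> snd z \<and> snd z \<le> hi" for z unfolding bd by simp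
  fix z n k assume z: "z \<in> band hi lo" "(f^^n) z \<in> band hi lo" "k \<le> n"
  have "snd ((f^^k) z) \<le> hi" using good_iter[OF ghi] z(1) bd by auto
  moreover have "lo \<le> snd ((f^^k) z)"
  proof (rule ccontr)
    assume "\<not> ?thesis"
    then have "snd ((f^^(n-k)) ((f^^k) z)) < lo" using good_iter_lt[OF glo] by simp
    moreover have "(f^^(n-k)) ((f^^k) z) = (f^^n) z" using z(3) by (metis funpow_add comp_apply le_add_diff_inverse2)
    ultimately show False using z(2) bd by auto
  qed
  ultimately show "(f^^k) z \<in> band hi lo" using bd by auto
qed

lemma theta_witness:
  assumes Lc: "f ` hline lo \<subseteq> Uminus (hline lo)" and lh: "lo < hi" and ne: "Theta f (band hi lo) \<noteq> {}"
  shows "good f lo"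
proof -
  obtain z where z: "z \<in> Theta f (band hi lo)" using ne by blast
  have bd: "band hi lo = {z. lo \<le> snd z \<and> snd z \<le> hi}" using lh by (auto simp: band_def)
  have "z \<in> band hi lo" "iter_int f 1 z \<in> band hi lo" using z unfolding Theta_def by auto
  then have a: "lo \<le> snd z" "lo \<le> snd (f z)" using bd by (auto simp: iter_int_def)
  then have "snd z \<noteq> lo" using Uminus_hline[OF Lc, of z] by auto
  then show ?thesis using good_witness[OF Lc _ a(2)] a(1) by simp
qed

end

lemma hull_pos:
  assumes "X \<subseteq> ereal_hull Y" "Y \<subseteq> {a<..<b}" shows "X \<subseteq> {a<..<b}"
proof
  fix v assume "v \<in> X"
  then obtain p q where "p \<in> Y" "q \<in> Y" "p \<le> v" "v \<le> q" using assms(1) unfolding ereal_hull_def by blast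
  moreover have "a < p" "q < b" using assms(2) \<open>p \<in> Y\<close> \<open>q \<in> Y\<close> by auto
  ultimately show "v \<in> {a<..<b}" using less_le_trans[of a p v] le_less_trans[of v q b] by auto
qed

theorem proposition6p7:
  fixes f :: "real \<times> real \<Rightarrow> real \<times> real"
    and c0 c1 c2 :: real
  assumes homeo: "\<exists>g. homeomorphism UNIV UNIV f g"
    and iso: "isotopic_to_id f"
    and comm: "\<forall>z. f (Ttrans z) = Ttrans (f z)"
    and H1a: "hline c0 \<subseteq> Uplus (hline c1)"
    and H1b: "hline c1 \<subseteq> Uplus (hline c2)"
    and H1c: "\<forall>c\<in>{c0, c1, c2}. f ` hline c \<subseteq> Uminus (hline c)"
    and H2: "\<forall>n::nat. n \<ge> 1 \<longrightarrow> (f ^^ n) ` hline c0 \<inter> hline c2 \<noteq> {}"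
    and H3a: "Theta f (band c0 c1) \<noteq> {}" and H3b: "Theta f (band c1 c2) \<noteq> {}"
    and H3c: "rot_set f (Theta f (band c0 c1)) \<subseteq> {0<..<\<infinity>}"
    and H3d: "rot_set f (Theta f (band c1 c2)) \<subseteq> {-\<infinity><..<0}"
  shows "rot_set f (band c0 c1) \<subseteq> ereal_hull (rot_set f (Theta f (band c0 c1)))
       \<and> rot_set f (band c1 c2) \<subseteq> ereal_hull (rot_set f (Theta f (band c1 c2)))
       \<and> rot_set f (band c0 c1) \<subseteq> {0<..<\<infinity>}
       \<and> rot_set f (band c1 c2) \<subseteq> {-\<infinity><..<0}"
proof -
  obtain g where hom: "homeomorphism UNIV UNIV f g" using homeo by blast
  interpret S0 f g using hom comm by unfold_locales
  have c01: "c1 < c0" using subsetD[OF H1a, of "(0,c0)"] unfolding hline_def Uplus_def by auto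
  have c12: "c2 < c1" using subsetD[OF H1b, of "(0,c1)"] unfolding hline_def Uplus_def by auto
  have L0: "f ` hline c0 \<subseteq> Uminus (hline c0)" and L1: "f ` hline c1 \<subseteq> Uminus (hline c1)"
    and L2: "f ` hline c2 \<subseteq> Uminus (hline c2)" using H1c by auto
  have g1: "good f c1" by (rule theta_witness[OF L1 c01 H3a])
  have g2: "good f c2" by (rule theta_witness[OF L2 c12 H3b])
  have g0: "good f c0"
  proof (rule ccontr)
    assume "\<not> good f c0"
    then have sub: "{z. c0 \<le> snd z} \<subseteq> f ` {z. snd z < c0}" using dichotomy[OF L0] by blast
    obtain M where M: "\<forall>z. c1 \<le> snd z \<and> snd z \<le> c0 \<longrightarrow> snd (f z) \<le> M" using snd_bdd by blast
    define u where "u = (0::real, max c0 (M+1))"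
    have "u \<in> f ` {z. snd z < c0}" using sub by (auto simp: u_def)
    then obtain w where w: "u = f w" "snd w < c0" by auto
    show False
    proof (cases "snd w \<le> c1")
      case True
      then have "snd (f w) < c1" using goodD[OF g1] by blast
      moreover have "snd (f w) = max c0 (M+1)" using w(1) by (simp add: u_def prod_eq_iff)
      ultimately show False using c01 by linarith
    next
      case False
      then have "c1 \<le> snd w \<and> snd w \<le> c0" using w by auto
      then have "snd (f w) \<le> M" using M by blast
      moreover have "snd (f w) = max c0 (M+1)" using w(1) by (simp add: u_def prod_eq_iff)
      ultimately show False by linarith
    qed
  qed
  interpret A0: S f g "band c0 c1" c1 c0 by (rule band_S[OF g1 g0 c01])
  interpret A1: S f g "band c1 c2" c2 c1 by (rule band_S[OF g2 g1 c12])
  have i0: "rot_set f (band c0 c1) \<subseteq> ereal_hull (rot_set f (Theta f (band c0 c1)))" using A0.hull by blast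
  have i1: "rot_set f (band c1 c2) \<subseteq> ereal_hull (rot_set f (Theta f (band c1 c2)))" using A1.hull by blast
  show ?thesis using i0 i1 hull_pos[OF i0 H3c] hull_pos[OF i1 H3d] by blast
qed


end
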